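(* Let $E$ be a congruence on $\overline{\boldsymbol{T}(X_1,\ldots,X_n)}$. The following are equivalent: (1) if $(f,-\infty)\in E$, then $f=-\infty$; (2) $\overline{\boldsymbol{T}(X_1,\ldots,X_n)}/E$ is a semifield; (3) $E$ is a semifield.
   Context: $\boldsymbol{T}=\mathbb{R}\cup\{-\infty\}$ with $a\oplus b=\max\{a,b\}$, $a\odot b=a+b$. $\overline{\boldsymbol{T}[X_1,\ldots,X_n]}$ is the tropical polynomial semiring modulo identifying polynomials defining the same function $\boldsymbol{T}^n\to\boldsymbol{T}$; it is cancellative and $\overline{\boldsymbol{T}(X_1,\ldots,X_n)}$ is its semifield of fractions, with zero $-\infty$ and one $0$. A semifield is a commutative semiring with $0\neq1$ in which every nonzero element is multiplicatively invertible. A congruence is an equivalence relation $E\subset S\times S$ compatible with both operations; $E$ is a subsemiring of $S\times S$ (componentwise operations, zero $(-\infty,-\infty)$, one $(0,0)$), and "$E$ is a semifield" refers to this structure. *)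

theory Defs
  imports "HOL-Algebra.Ring" "HOL-Library.Extended_Real"
begin

definition semifield :: "('a, 'b) ring_scheme \<Rightarrow> bool" where
  "semifield R \<longleftrightarrow> semiring R \<and> comm_monoid R \<and> \<one>\<^bsub>R\<^esub> \<noteq> \<zero>\<^bsub>R\<^esub>
      \<and> (\<forall>x \<in> carrier R - {\<zero>\<^bsub>R\<^esub>}. x \<in> Units R)"

definition semiring_congruence :: "('a, 'b) ring_scheme \<Rightarrow> ('a \<times> 'a) set \<Rightarrow> bool" where
  "semiring_congruence R E \<longleftrightarrow> E \<subseteq> carrier R \<times> carrier R \<and> equiv (carrier R) E
     \<and> (\<forall>a b c d. (a, b) \<in> E \<longrightarrow> (c, d) \<in> E \<longrightarrow>
          (a \<oplus>\<^bsub>R\<^esub> c, b \<oplus>\<^bsub>R\<^esub> d) \<in> E \<and> (a \<otimes>\<^bsub>R\<^esub> c, b \<otimes>\<^bsub>R\<^esub> d) \<in> E)"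

definition quot_semiring :: "('a, 'b) ring_scheme \<Rightarrow> ('a \<times> 'a) set \<Rightarrow> 'a set ring" where
  "quot_semiring R E = \<lparr> carrier = carrier R // E,
      mult = (\<lambda>A B. E `` {(SOME a. a \<in> A) \<otimes>\<^bsub>R\<^esub> (SOME b. b \<in> B)}),
      one = E `` {\<one>\<^bsub>R\<^esub>},
      zero = E `` {\<zero>\<^bsub>R\<^esub>},
      add = (\<lambda>A B. E `` {(SOME a. a \<in> A) \<oplus>\<^bsub>R\<^esub> (SOME b. b \<in> B)}) \<rparr>"

text \<open>A congruence E viewed as a subsemiring of S \<times> S (componentwise operations).\<close>
definition pair_semiring :: "('a, 'b) ring_scheme \<Rightarrow> ('a \<times> 'a) set \<Rightarrow> ('a \<times> 'a) ring" where
  "pair_semiring R E = \<lparr> carrier = E,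
      mult = (\<lambda>p q. (fst p \<otimes>\<^bsub>R\<^esub> fst q, snd p \<otimes>\<^bsub>R\<^esub> snd q)),
      one = (\<one>\<^bsub>R\<^esub>, \<one>\<^bsub>R\<^esub>),
      zero = (\<zero>\<^bsub>R\<^esub>, \<zero>\<^bsub>R\<^esub>),
      add = (\<lambda>p q. (fst p \<oplus>\<^bsub>R\<^esub> fst q, snd p \<oplus>\<^bsub>R\<^esub> snd q)) \<rparr>"

text \<open>Tropical numbers T = R \<union> {-\<infinity>} are modelled inside ereal (+\<infinity> never occurs);
  max is tropical addition and + is tropical multiplication.
  A nonzero tropical polynomial is a nonempty finite set of terms c \<odot> X^a (c real,
  a : 'n \<Rightarrow> nat); its function on real points x is max_{(c,a)} (c + \<Sum>_i a_i x_i).\<close>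
definition trop_poly_funs :: "(('n::finite \<Rightarrow> real) \<Rightarrow> real) set" where
  "trop_poly_funs = {p. \<exists>T :: (real \<times> ('n \<Rightarrow> nat)) set. finite T \<and> T \<noteq> {} \<and>
      p = (\<lambda>x. Max ((\<lambda>(c, a). c + (\<Sum>i\<in>UNIV. real (a i) * x i)) ` T))}"

text \<open>Elements of the semifield of fractions of the semiring of tropical polynomial functions:
  the zero (-\<infinity>) and the fractions p \<oslash> q of nonzero polynomials, represented by their
  (faithful) function x \<mapsto> p(x) - q(x) on R^n.\<close>
definition trop_rat_funs :: "(('n::finite \<Rightarrow> real) \<Rightarrow> ereal) set" where
  "trop_rat_funs = {\<lambda>x. -\<infinity>} \<union>
     {f. \<exists>p \<in> trop_poly_funs. \<exists>q \<in> trop_poly_funs. f = (\<lambda>x. ereal (p x - q x))}"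

definition TRF :: "(('n::finite \<Rightarrow> real) \<Rightarrow> ereal) ring" where
  "TRF = \<lparr> carrier = trop_rat_funs,
      mult = (\<lambda>f g x. f x + g x),
      one = (\<lambda>x. 0),
      zero = (\<lambda>x. -\<infinity>),
      add = (\<lambda>f g x. max (f x) (g x)) \<rparr>"

end

theory Submission
  imports Defs
begin

lemma cong_equiv: "semiring_congruence R E \<Longrightarrow> equiv (carrier R) E"
  by (simp add: semiring_congruence_def)
lemma cong_sub: "semiring_congruence R E \<Longrightarrow> (a,b) \<in> E \<Longrightarrow> a \<in> carrier R \<and> b \<in> carrier R"
  by (auto simp add: semiring_congruence_def)
lemma cong_ops: "semiring_congruence R E \<Longrightarrow> (a,b) \<in> E \<Longrightarrow> (c,d) \<in> E \<Longrightarrow>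
   (a \<oplus>\<^bsub>R\<^esub> c, b \<oplus>\<^bsub>R\<^esub> d) \<in> E \<and> (a \<otimes>\<^bsub>R\<^esub> c, b \<otimes>\<^bsub>R\<^esub> d) \<in> E"
  by (simp add: semiring_congruence_def)
lemma cong_refl: "semiring_congruence R E \<Longrightarrow> a \<in> carrier R \<Longrightarrow> (a,a) \<in> E"
  using cong_equiv equiv_def refl_onD by fastforce
lemma cong_sym: "semiring_congruence R E \<Longrightarrow> (a,b) \<in> E \<Longrightarrow> (b,a) \<in> E"
  using cong_equiv equiv_def symD by fastforce

lemma q_carrier[simp]: "carrier (quot_semiring R E) = carrier R // E"
  and q_one[simp]: "one (quot_semiring R E) = E `` {one R}"
  and q_zero[simp]: "zero (quot_semiring R E) = E `` {zero R}"
  by (simp_all add: quot_semiring_def)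

lemma q_some: assumes "semiring_congruence R E" "a \<in> carrier R"
  shows "(a, SOME x. x \<in> E `` {a}) \<in> E"
proof -
  have "a \<in> E `` {a}" using cong_refl[OF assms] by simp
  hence "(SOME x. x \<in> E `` {a}) \<in> E `` {a}" by (rule someI)
  thus ?thesis by simp
qed

lemma q_mult[simp]: assumes "semiring_congruence R E" "a \<in> carrier R" "b \<in> carrier R"
  shows "mult (quot_semiring R E) (E``{a}) (E``{b}) = E``{a \<otimes>\<^bsub>R\<^esub> b}"
proof -
  have "(a \<otimes>\<^bsub>R\<^esub> b, (SOME x. x \<in> E `` {a}) \<otimes>\<^bsub>R\<^esub> (SOME x. x \<in> E `` {b})) \<in> E"
    using cong_ops[OF assms(1) q_some[OF assms(1,2)] q_some[OF assms(1,3)]] by simp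
  thus ?thesis unfolding quot_semiring_def
    using equiv_class_eq[OF cong_equiv[OF assms(1)]] by simp
qed

lemma q_add[simp]: assumes "semiring_congruence R E" "a \<in> carrier R" "b \<in> carrier R"
  shows "add (quot_semiring R E) (E``{a}) (E``{b}) = E``{a \<oplus>\<^bsub>R\<^esub> b}"
proof -
  have "(a \<oplus>\<^bsub>R\<^esub> b, (SOME x. x \<in> E `` {a}) \<oplus>\<^bsub>R\<^esub> (SOME x. x \<in> E `` {b})) \<in> E"
    using cong_ops[OF assms(1) q_some[OF assms(1,2)] q_some[OF assms(1,3)]] by simp
  thus ?thesis unfolding quot_semiring_def
    using equiv_class_eq[OF cong_equiv[OF assms(1)]] by simp
qed

lemma quot_struct:
  assumes R: "semiring R" "comm_monoid R" and C: "semiring_congruence R E"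
  shows "semiring (quot_semiring R E) \<and> comm_monoid (quot_semiring R E)"
proof -
  interpret semiring R by fact
  interpret comm_monoid R by fact
  note simps = q_mult[OF C] q_add[OF C] quotientI
  have am: "abelian_monoid (quot_semiring R E)"
    by (rule abelian_monoidI) (auto elim!: quotientE simp: simps a_ac)
  have cm: "comm_monoid (quot_semiring R E)"
    by (rule comm_monoidI) (auto elim!: quotientE simp: simps m_ac)
  have "semiring (quot_semiring R E)"
    apply (rule semiring.intro[OF am comm_monoid.axioms(1)[OF cm]])
    apply (unfold_locales)
    by (auto elim!: quotientE simp: simps l_distr r_distr)
  thus ?thesis using cm by simp
qed

lemma p_simps[simp]: "carrier (pair_semiring R E) = E"
  "one (pair_semiring R E) = (one R, one R)"
  "zero (pair_semiring R E) = (zero R, zero R)"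
  "mult (pair_semiring R E) p q = (fst p \<otimes>\<^bsub>R\<^esub> fst q, snd p \<otimes>\<^bsub>R\<^esub> snd q)"
  "add (pair_semiring R E) p q = (fst p \<oplus>\<^bsub>R\<^esub> fst q, snd p \<oplus>\<^bsub>R\<^esub> snd q)"
  by (simp_all add: pair_semiring_def)

lemma pair_struct:
  assumes R: "semiring R" "comm_monoid R" and C: "semiring_congruence R E"
  shows "semiring (pair_semiring R E) \<and> comm_monoid (pair_semiring R E)"
proof -
  interpret semiring R by fact
  interpret comm_monoid R by fact
  note simps = cong_ops[OF C] cong_refl[OF C]
  have cs: "\<And>a b. (a,b) \<in> E \<Longrightarrow> a \<in> carrier R \<and> b \<in> carrier R" using cong_sub[OF C] by blast
  have am: "abelian_monoid (pair_semiring R E)"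
    by (rule abelian_monoidI) (auto dest!: cs simp: simps a_ac)
  have cm: "comm_monoid (pair_semiring R E)"
    by (rule comm_monoidI) (auto dest!: cs simp: simps m_ac)
  have "semiring (pair_semiring R E)"
    apply (rule semiring.intro[OF am comm_monoid.axioms(1)[OF cm]])
    apply (unfold_locales)
    by (auto dest!: cs simp: simps l_distr r_distr)
  thus ?thesis using cm by simp
qed

context fixes R :: "('a,'b) ring_scheme" (structure)
begin

lemma generic:
  assumes SF: "semifield R" and C: "semiring_congruence R E"
  shows "((\<forall>f. (f, \<zero>\<^bsub>R\<^esub>) \<in> E \<longrightarrow> f = \<zero>\<^bsub>R\<^esub>) \<longleftrightarrow> semifield (quot_semiring R E))
       \<and> (semifield (quot_semiring R E) \<longleftrightarrow> semifield (pair_semiring R E))"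
proof -
  have R: "semiring R" "comm_monoid R" and onz: "\<one>\<^bsub>R\<^esub> \<noteq> \<zero>\<^bsub>R\<^esub>"
    and U: "\<And>x. x \<in> carrier R \<Longrightarrow> x \<noteq> \<zero>\<^bsub>R\<^esub> \<Longrightarrow> x \<in> Units R"
    using SF by (auto simp: semifield_def)
  interpret semiring R by fact
  interpret comm_monoid R by fact
  have eq: "equiv (carrier R) E" using C by (rule cong_equiv)
  have cs: "\<And>a b. (a,b) \<in> E \<Longrightarrow> a \<in> carrier R \<and> b \<in> carrier R" using cong_sub[OF C] by blast
  have inv: "\<And>x. x \<in> carrier R \<Longrightarrow> x \<noteq> \<zero> \<Longrightarrow> \<exists>y\<in>carrier R. y \<otimes> x = \<one> \<and> x \<otimes> y = \<one>"
    using U unfolding Units_def by blast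
  have QS: "semiring (quot_semiring R E) \<and> comm_monoid (quot_semiring R E)"
    using quot_struct[OF R C] .
  have PS: "semiring (pair_semiring R E) \<and> comm_monoid (pair_semiring R E)"
    using pair_struct[OF R C] .
  have c12: "semifield (quot_semiring R E)" if H: "\<forall>f. (f, \<zero>) \<in> E \<longrightarrow> f = \<zero>"
  proof -
    have "E `` {\<one>} \<noteq> E `` {\<zero>}"
      using eq_equiv_class_iff[OF eq, of \<one> \<zero>] H onz by auto
    moreover have "X \<in> Units (quot_semiring R E)" if X: "X \<in> carrier R // E" "X \<noteq> E `` {\<zero>}" for X
    proof -
      obtain a where a: "a \<in> carrier R" "X = E `` {a}" using X(1) by (auto elim!: quotientE)
      have "a \<noteq> \<zero>" using a X(2) by auto
      then obtain b where b: "b \<in> carrier R" "b \<otimes> a = \<one>" "a \<otimes> b = \<one>" using inv a by blast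
      show ?thesis unfolding Units_def using a b quotientI[of b "carrier R" E] q_mult[OF C]
        by (auto intro!: bexI[of _ "E``{b}"] quotientI)
    qed
    ultimately show ?thesis using QS unfolding semifield_def by auto
  qed
  have c21: "\<forall>f. (f, \<zero>) \<in> E \<longrightarrow> f = \<zero>" if S: "semifield (quot_semiring R E)"
  proof (intro allI impI, rule ccontr)
    fix f assume f: "(f, \<zero>) \<in> E" "f \<noteq> \<zero>"
    have fc: "f \<in> carrier R" using cs f by blast
    then obtain g where g: "g \<in> carrier R" "g \<otimes> f = \<one>" "f \<otimes> g = \<one>" using inv f by blast
    have "(f \<otimes> g, \<zero> \<otimes> g) \<in> E" using cong_ops[OF C f(1) cong_refl[OF C g(1)]] by simp
    hence "(\<one>, \<zero>) \<in> E" using g by simp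
    hence "E `` {\<one>} = E `` {\<zero>}" using equiv_class_eq[OF eq] by blast
    thus False using S unfolding semifield_def by simp
  qed
  have c13: "semifield (pair_semiring R E)" if H: "\<forall>f. (f, \<zero>) \<in> E \<longrightarrow> f = \<zero>"
  proof -
    have "p \<in> Units (pair_semiring R E)" if p: "p \<in> E" "p \<noteq> (\<zero>, \<zero>)" for p
    proof -
      obtain f g where fg: "p = (f,g)" by (cases p)
      have fgc: "f \<in> carrier R" "g \<in> carrier R" using cs p fg by auto
      have gnz: "g \<noteq> \<zero>" using H p fg by auto
      have fnz: "f \<noteq> \<zero>" using H p fg cong_sym[OF C, of f g] gnz by auto
      obtain f' where f': "f' \<in> carrier R" "f' \<otimes> f = \<one>" "f \<otimes> f' = \<one>" using inv fgc fnz by blast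
      obtain g' where g': "g' \<in> carrier R" "g' \<otimes> g = \<one>" "g \<otimes> g' = \<one>" using inv fgc gnz by blast
      have "(f \<otimes> (f' \<otimes> g'), g \<otimes> (f' \<otimes> g')) \<in> E"
        using cong_ops[OF C _ cong_refl[OF C], of f g "f' \<otimes> g'"] p fg f' g' by auto
      moreover have "f \<otimes> (f' \<otimes> g') = g'" using f' g' fgc by (metis m_assoc l_one)
      moreover have "g \<otimes> (f' \<otimes> g') = f'" using f' g' fgc by (metis m_comm m_assoc r_one m_closed)
      ultimately have "(f', g') \<in> E" using cong_sym[OF C] by simp
      thus ?thesis unfolding Units_def using p fg f' g' by (auto intro!: bexI[of _ "(f',g')"])
    qed
    thus ?thesis using PS onz unfolding semifield_def by auto
  qed
  have c31: "\<forall>f. (f, \<zero>) \<in> E \<longrightarrow> f = \<zero>" if S: "semifield (pair_semiring R E)"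
  proof (intro allI impI, rule ccontr)
    fix f assume f: "(f, \<zero>) \<in> E" "f \<noteq> \<zero>"
    hence "(f, \<zero>) \<in> Units (pair_semiring R E)" using S unfolding semifield_def by auto
    then obtain a b where ab: "(a,b) \<in> E" "b \<otimes> \<zero> = \<one>" unfolding Units_def by auto
    thus False using cs onz by auto
  qed
  show ?thesis using c12 c21 c13 c31 by blast
qed

end

definition lin :: "('n::finite \<Rightarrow> nat) \<Rightarrow> ('n \<Rightarrow> real) \<Rightarrow> real" where
  "lin a x = (\<Sum>i\<in>UNIV. real (a i) * x i)"

lemma lin_add: "lin (\<lambda>i. a i + b i) x = lin a x + lin b x"
  by (simp add: lin_def sum.distrib algebra_simps)

lemma tp_iff: "p \<in> trop_poly_funs \<longleftrightarrow> (\<exists>T. finite T \<and> T \<noteq> {} \<and>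
      p = (\<lambda>x. Max ((\<lambda>(c, a). c + lin a x) ` T)))"
  by (simp add: trop_poly_funs_def lin_def)

lemma Max_sum:
  fixes f g :: "'x \<Rightarrow> real"
  assumes "finite A" "A \<noteq> {}" "finite B" "B \<noteq> {}"
  shows "Max ((\<lambda>(u,v). f u + g v) ` (A \<times> B)) = Max (f ` A) + Max (g ` B)"
proof (rule Max_eqI)
  show "finite ((\<lambda>(u,v). f u + g v) ` (A \<times> B))" using assms by simp
  fix y assume "y \<in> (\<lambda>(u,v). f u + g v) ` (A \<times> B)"
  then obtain u v where "u \<in> A" "v \<in> B" "y = f u + g v" by auto
  thus "y \<le> Max (f ` A) + Max (g ` B)" using assms by (simp add: add_mono)
next
  have "Max (f ` A) \<in> f ` A" by (rule Max_in) (simp_all add: assms)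
  then obtain u where u: "u \<in> A" "f u = Max (f ` A)" by auto
  have "Max (g ` B) \<in> g ` B" by (rule Max_in) (simp_all add: assms)
  then obtain v where v: "v \<in> B" "g v = Max (g ` B)" by auto
  show "Max (f ` A) + Max (g ` B) \<in> (\<lambda>(u,v). f u + g v) ` (A \<times> B)"
    using u v by (auto intro!: image_eqI[of _ _ "(u,v)"])
qed

lemma tp_plus: assumes "p \<in> trop_poly_funs" "q \<in> trop_poly_funs"
  shows "(\<lambda>x. p x + q x) \<in> trop_poly_funs"
proof -
  have "\<exists>T. finite T \<and> T \<noteq> {} \<and> p = (\<lambda>x. Max ((\<lambda>(c, a). c + lin a x) ` T))"
    using assms(1) by (simp only: tp_iff)
  then obtain T1 where T1: "finite T1" "T1 \<noteq> {}" "p = (\<lambda>x. Max ((\<lambda>(c, a). c + lin a x) ` T1))"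
    by (elim exE conjE)
  have "\<exists>T. finite T \<and> T \<noteq> {} \<and> q = (\<lambda>x. Max ((\<lambda>(c, a). c + lin a x) ` T))"
    using assms(2) by (simp only: tp_iff)
  then obtain T2 where T2: "finite T2" "T2 \<noteq> {}" "q = (\<lambda>x. Max ((\<lambda>(c, a). c + lin a x) ` T2))"
    by (elim exE conjE)
  define h where "h = (\<lambda>((c1::real,a1::'a\<Rightarrow>nat),(c2::real,a2::'a\<Rightarrow>nat)). (c1+c2, \<lambda>i. a1 i + a2 i))"
  have "(\<lambda>x. p x + q x) = (\<lambda>x. Max ((\<lambda>(c, a). c + lin a x) ` (h ` (T1 \<times> T2))))"
  proof
    fix x :: "'a \<Rightarrow> real"
    define F where "F = (\<lambda>(c::real, a). c + lin a x)"
    have e: "F ` (h ` (T1 \<times> T2)) = (\<lambda>(u,v). F u + F v) ` (T1 \<times> T2)"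
      unfolding image_image h_def F_def by (rule image_cong[OF refl]) (clarsimp simp: lin_add)
    have "p x + q x = Max (F ` T1) + Max (F ` T2)" unfolding F_def by (subst T1(3), subst T2(3)) (rule refl)
    also have "\<dots> = Max ((\<lambda>(u,v). F u + F v) ` (T1 \<times> T2))" by (rule Max_sum[symmetric, OF T1(1,2) T2(1,2)])
    also have "\<dots> = Max (F ` (h ` (T1 \<times> T2)))" by (simp only: e)
    finally show "p x + q x = Max ((\<lambda>(c, a). c + lin a x) ` (h ` (T1 \<times> T2)))" unfolding F_def .
  qed
  moreover have "finite (h ` (T1 \<times> T2))" using T1 T2 by simp
  moreover have "h ` (T1 \<times> T2) \<noteq> {}" using T1 T2 by simp
  ultimately show ?thesis unfolding tp_iff by (intro exI[of _ "h ` (T1 \<times> T2)"] conjI)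
qed

lemma tp_max: assumes "p \<in> trop_poly_funs" "q \<in> trop_poly_funs"
  shows "(\<lambda>x. max (p x) (q x)) \<in> trop_poly_funs"
proof -
  have "\<exists>T. finite T \<and> T \<noteq> {} \<and> p = (\<lambda>x. Max ((\<lambda>(c, a). c + lin a x) ` T))"
    using assms(1) by (simp only: tp_iff)
  then obtain T1 where T1: "finite T1" "T1 \<noteq> {}" "p = (\<lambda>x. Max ((\<lambda>(c, a). c + lin a x) ` T1))"
    by (elim exE conjE)
  have "\<exists>T. finite T \<and> T \<noteq> {} \<and> q = (\<lambda>x. Max ((\<lambda>(c, a). c + lin a x) ` T))"
    using assms(2) by (simp only: tp_iff)
  then obtain T2 where T2: "finite T2" "T2 \<noteq> {}" "q = (\<lambda>x. Max ((\<lambda>(c, a). c + lin a x) ` T2))"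
    by (elim exE conjE)
  have "(\<lambda>x. max (p x) (q x)) = (\<lambda>x. Max ((\<lambda>(c, a). c + lin a x) ` (T1 \<union> T2)))"
    using T1 T2 by (simp add: image_Un Max_Un)
  moreover have "finite (T1 \<union> T2)" "T1 \<union> T2 \<noteq> {}" using T1 T2 by auto
  ultimately show ?thesis unfolding tp_iff by (intro exI[of _ "T1 \<union> T2"] conjI)
qed

lemma tp_const0: "(\<lambda>x. 0) \<in> trop_poly_funs"
proof -
  have "(\<lambda>x::'a\<Rightarrow>real. 0::real) = (\<lambda>x. Max ((\<lambda>(c, a). c + lin a x) ` {(0, \<lambda>i. 0)}))"
    by (simp add: lin_def)
  thus ?thesis unfolding tp_iff by blast
qed

lemma trf_cases: "f \<in> trop_rat_funs \<Longrightarrow> f = (\<lambda>x. -\<infinity>) \<or>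
  (\<exists>p \<in> trop_poly_funs. \<exists>q \<in> trop_poly_funs. f = (\<lambda>x. ereal (p x - q x)))"
  by (simp add: trop_rat_funs_def)

lemma trf_ninf: "f \<in> trop_rat_funs \<Longrightarrow> f x \<noteq> \<infinity>"
  by (auto simp: trop_rat_funs_def)

lemma zero_in: "(\<lambda>x. -\<infinity>) \<in> trop_rat_funs" by (simp add: trop_rat_funs_def)

lemma trf_intro: "p \<in> trop_poly_funs \<Longrightarrow> q \<in> trop_poly_funs \<Longrightarrow> (\<lambda>x. ereal (p x - q x)) \<in> trop_rat_funs"
  unfolding trop_rat_funs_def by blast

lemma trf_mult: assumes "f \<in> trop_rat_funs" "g \<in> trop_rat_funs"
  shows "(\<lambda>x. f x + g x) \<in> trop_rat_funs"
proof -
  consider "f = (\<lambda>x. -\<infinity>)" | "g = (\<lambda>x. -\<infinity>)"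
    | p1 q1 p2 q2 where "p1 \<in> trop_poly_funs" "q1 \<in> trop_poly_funs" "p2 \<in> trop_poly_funs" "q2 \<in> trop_poly_funs"
      "f = (\<lambda>x. ereal (p1 x - q1 x))" "g = (\<lambda>x. ereal (p2 x - q2 x))"
    using trf_cases[OF assms(1)] trf_cases[OF assms(2)] by blast
  thus ?thesis
  proof cases
    case 1
    have "(\<lambda>x. f x + g x) = (\<lambda>x. -\<infinity>)"
    proof
      fix x show "f x + g x = -\<infinity>" using 1 trf_ninf[OF assms(2), of x] by (cases "g x") auto
    qed
    thus ?thesis by (simp add: zero_in)
  next
    case 2
    have "(\<lambda>x. f x + g x) = (\<lambda>x. -\<infinity>)"
    proof
      fix x show "f x + g x = -\<infinity>" using 2 trf_ninf[OF assms(1), of x] by (cases "f x") auto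
    qed
    thus ?thesis by (simp add: zero_in)
  next
    case 3
    have "(\<lambda>x. f x + g x) = (\<lambda>x. ereal ((p1 x + p2 x) - (q1 x + q2 x)))" using 3 by auto
    moreover have P: "(\<lambda>x. p1 x + p2 x) \<in> trop_poly_funs" using 3 by (intro tp_plus)
    moreover have Q: "(\<lambda>x. q1 x + q2 x) \<in> trop_poly_funs" using 3 by (intro tp_plus)
    ultimately show ?thesis using trf_intro[OF P Q] by simp
  qed
qed

lemma trf_add: assumes "f \<in> trop_rat_funs" "g \<in> trop_rat_funs"
  shows "(\<lambda>x. max (f x) (g x)) \<in> trop_rat_funs"
proof -
  consider "f = (\<lambda>x. -\<infinity>)" | "g = (\<lambda>x. -\<infinity>)"
    | p1 q1 p2 q2 where "p1 \<in> trop_poly_funs" "q1 \<in> trop_poly_funs" "p2 \<in> trop_poly_funs" "q2 \<in> trop_poly_funs"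
      "f = (\<lambda>x. ereal (p1 x - q1 x))" "g = (\<lambda>x. ereal (p2 x - q2 x))"
    using trf_cases[OF assms(1)] trf_cases[OF assms(2)] by blast
  thus ?thesis
  proof cases
    case 1 thus ?thesis using assms(2) by simp
  next
    case 2 thus ?thesis using assms(1) by simp
  next
    case 3
    have "(\<lambda>x. max (f x) (g x)) = (\<lambda>x. ereal (max (p1 x + q2 x) (p2 x + q1 x) - (q1 x + q2 x)))"
      using 3 by (auto simp: max_def)
    moreover have P: "(\<lambda>x. max (p1 x + q2 x) (p2 x + q1 x)) \<in> trop_poly_funs"
      using 3 by (intro tp_max tp_plus)
    moreover have Q: "(\<lambda>x. q1 x + q2 x) \<in> trop_poly_funs" using 3 by (intro tp_plus)
    ultimately show ?thesis using trf_intro[OF P Q] by simp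
  qed
qed

lemma trf_TRF[simp]: "carrier TRF = trop_rat_funs" "one TRF = (\<lambda>x. 0)" "zero TRF = (\<lambda>x. -\<infinity>)"
  "mult TRF f g = (\<lambda>x. f x + g x)" "add TRF f g = (\<lambda>x. max (f x) (g x))"
  by (simp_all add: TRF_def)

lemma ereal0: "ereal 0 = 0" by (simp add: zero_ereal_def)

lemma one_in: "(\<lambda>x. 0) \<in> trop_rat_funs"
  using trf_intro[OF tp_const0 tp_const0] by (simp add: ereal0)

lemma semifield_TRF: "semifield (TRF :: (('n::finite \<Rightarrow> real) \<Rightarrow> ereal) ring)"
proof -
  have am: "abelian_monoid (TRF :: (('n::finite \<Rightarrow> real) \<Rightarrow> ereal) ring)"
  proof (rule abelian_monoidI)
    show "\<And>x y. x \<in> carrier TRF \<Longrightarrow> y \<in> carrier TRF \<Longrightarrow> x \<oplus>\<^bsub>TRF\<^esub> y \<in> carrier (TRF :: (('n::finite \<Rightarrow> real) \<Rightarrow> ereal) ring)"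
      by (simp add: trf_add)
    show "\<zero>\<^bsub>TRF\<^esub> \<in> carrier (TRF :: (('n::finite \<Rightarrow> real) \<Rightarrow> ereal) ring)" by (simp add: zero_in)
    show "\<And>x y z. (x \<oplus>\<^bsub>TRF\<^esub> y) \<oplus>\<^bsub>TRF\<^esub> z = x \<oplus>\<^bsub>(TRF :: (('n::finite \<Rightarrow> real) \<Rightarrow> ereal) ring)\<^esub> (y \<oplus>\<^bsub>TRF\<^esub> z)"
      by (simp add: max.assoc)
    show "\<And>x. \<zero>\<^bsub>TRF\<^esub> \<oplus>\<^bsub>(TRF :: (('n::finite \<Rightarrow> real) \<Rightarrow> ereal) ring)\<^esub> x = x" by simp
    show "\<And>x y. x \<oplus>\<^bsub>TRF\<^esub> y = y \<oplus>\<^bsub>(TRF :: (('n::finite \<Rightarrow> real) \<Rightarrow> ereal) ring)\<^esub> x"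
      by (simp add: max.commute)
  qed
  have cm: "comm_monoid (TRF :: (('n::finite \<Rightarrow> real) \<Rightarrow> ereal) ring)"
  proof (rule comm_monoidI)
    show "\<And>x y. x \<in> carrier TRF \<Longrightarrow> y \<in> carrier TRF \<Longrightarrow> x \<otimes>\<^bsub>TRF\<^esub> y \<in> carrier (TRF :: (('n::finite \<Rightarrow> real) \<Rightarrow> ereal) ring)"
      by (simp add: trf_mult)
    show "\<one>\<^bsub>TRF\<^esub> \<in> carrier (TRF :: (('n::finite \<Rightarrow> real) \<Rightarrow> ereal) ring)" by (simp add: one_in)
    show "\<And>x y z. (x \<otimes>\<^bsub>TRF\<^esub> y) \<otimes>\<^bsub>TRF\<^esub> z = x \<otimes>\<^bsub>(TRF :: (('n::finite \<Rightarrow> real) \<Rightarrow> ereal) ring)\<^esub> (y \<otimes>\<^bsub>TRF\<^esub> z)"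
      by (simp add: add.assoc)
    show "\<And>x. \<one>\<^bsub>TRF\<^esub> \<otimes>\<^bsub>(TRF :: (('n::finite \<Rightarrow> real) \<Rightarrow> ereal) ring)\<^esub> x = x" by simp
    show "\<And>x y. x \<otimes>\<^bsub>TRF\<^esub> y = y \<otimes>\<^bsub>(TRF :: (('n::finite \<Rightarrow> real) \<Rightarrow> ereal) ring)\<^esub> x"
      by (simp add: add.commute)
  qed
  have distr: "max a b + c = max (a + c) (b + c)" if "a \<noteq> \<infinity>" "b \<noteq> \<infinity>" "c \<noteq> \<infinity>" for a b c :: ereal
    using that by (cases a; cases b; cases c) (auto simp: max_def)
  have sr: "semiring (TRF :: (('n::finite \<Rightarrow> real) \<Rightarrow> ereal) ring)"
    apply (rule semiring.intro[OF am comm_monoid.axioms(1)[OF cm]])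
  proof (unfold_locales)
    fix x y z :: "('n \<Rightarrow> real) \<Rightarrow> ereal" assume "x \<in> carrier TRF" "y \<in> carrier TRF" "z \<in> carrier TRF"
    hence n: "\<And>t. x t \<noteq> \<infinity>" "\<And>t. y t \<noteq> \<infinity>" "\<And>t. z t \<noteq> \<infinity>" using trf_ninf by auto
    show "(x \<oplus>\<^bsub>TRF\<^esub> y) \<otimes>\<^bsub>TRF\<^esub> z = x \<otimes>\<^bsub>TRF\<^esub> z \<oplus>\<^bsub>TRF\<^esub> y \<otimes>\<^bsub>TRF\<^esub> z"
      using n by (simp add: distr)
    show "z \<otimes>\<^bsub>TRF\<^esub> (x \<oplus>\<^bsub>TRF\<^esub> y) = z \<otimes>\<^bsub>TRF\<^esub> x \<oplus>\<^bsub>TRF\<^esub> z \<otimes>\<^bsub>TRF\<^esub> y"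
      using n by (simp add: distr add.commute[of "z _"])
  next
    fix x :: "('n \<Rightarrow> real) \<Rightarrow> ereal" assume "x \<in> carrier TRF"
    hence n: "\<And>t. x t \<noteq> \<infinity>" using trf_ninf by simp
    have "-\<infinity> + x t = -\<infinity>" "x t + -\<infinity> = -\<infinity>" for t using n[of t] by (cases "x t"; simp)+
    thus "\<zero>\<^bsub>TRF\<^esub> \<otimes>\<^bsub>TRF\<^esub> x = \<zero>\<^bsub>TRF\<^esub>" "x \<otimes>\<^bsub>TRF\<^esub> \<zero>\<^bsub>TRF\<^esub> = \<zero>\<^bsub>TRF\<^esub>"
      by auto
  qed
  have U: "f \<in> Units (TRF :: (('n::finite \<Rightarrow> real) \<Rightarrow> ereal) ring)" if f: "f \<in> trop_rat_funs" "f \<noteq> (\<lambda>x. -\<infinity>)" for f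
  proof -
    obtain p q where pq: "p \<in> trop_poly_funs" "q \<in> trop_poly_funs" "f = (\<lambda>x. ereal (p x - q x))"
      using trf_cases[OF f(1)] f(2) by blast
    have g: "(\<lambda>x. ereal (q x - p x)) \<in> trop_rat_funs" by (rule trf_intro[OF pq(2,1)])
    have e1: "(\<lambda>x. ereal (q x - p x)) \<otimes>\<^bsub>TRF\<^esub> f = \<one>\<^bsub>(TRF :: (('n::finite \<Rightarrow> real) \<Rightarrow> ereal) ring)\<^esub>"
      using pq by (simp add: ereal0)
    have e2: "f \<otimes>\<^bsub>TRF\<^esub> (\<lambda>x. ereal (q x - p x)) = \<one>\<^bsub>(TRF :: (('n::finite \<Rightarrow> real) \<Rightarrow> ereal) ring)\<^esub>"
      using pq by (simp add: ereal0)
    show ?thesis unfolding Units_def using f g e1 e2 by auto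
  qed
  have ne: "(\<lambda>x::'n\<Rightarrow>real. 0::ereal) \<noteq> (\<lambda>x. -\<infinity>)"
  proof
    assume a: "(\<lambda>x::'n\<Rightarrow>real. 0::ereal) = (\<lambda>x. -\<infinity>)"
    have "(0::ereal) = -\<infinity>" using arg_cong[where f="\<lambda>h. h undefined", OF a] by simp
    thus False by simp
  qed
  show ?thesis unfolding semifield_def
  proof (intro conjI ballI sr cm)
    show "\<one>\<^bsub>TRF\<^esub> \<noteq> \<zero>\<^bsub>(TRF :: (('n::finite \<Rightarrow> real) \<Rightarrow> ereal) ring)\<^esub>" using ne by simp
    fix x assume "x \<in> carrier (TRF :: (('n::finite \<Rightarrow> real) \<Rightarrow> ereal) ring) - {\<zero>\<^bsub>TRF\<^esub>}"
    thus "x \<in> Units TRF" using U by simp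
  qed
qed


theorem lemma3p4:
  fixes E :: "((('n::finite \<Rightarrow> real) \<Rightarrow> ereal) \<times> (('n \<Rightarrow> real) \<Rightarrow> ereal)) set"
  assumes "semiring_congruence TRF E"
  shows "((\<forall>f. (f, \<zero>\<^bsub>TRF\<^esub>) \<in> E \<longrightarrow> f = \<zero>\<^bsub>TRF\<^esub>) \<longleftrightarrow> semifield (quot_semiring TRF E))
       \<and> (semifield (quot_semiring TRF E) \<longleftrightarrow> semifield (pair_semiring TRF E))"
  by (rule generic[OF semifield_TRF assms])

end
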